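(* For every $k\geq2$ and all integers $d_1,\dots,d_k\geq3$, $$R_{d_1,\dots,d_k}(W_{d_1}\otimes\cdots\otimes W_{d_k})\leq 2^{k-1}(d_1+\cdots+d_k).$$
   Context: Identify $S^d\mathbb{C}^2$ with binary forms of degree $d$ in a basis $\{x,y\}$; $W_d=x^{d-1}y$. The partially symmetric rank $R_{d_1,\dots,d_k}(T)$ of $T\in S^{d_1}\mathbb{C}^2\otimes\cdots\otimes S^{d_k}\mathbb{C}^2$ is the minimal $r$ such that $T=\sum_{i=1}^r v_{i,1}^{\otimes d_1}\otimes\cdots\otimes v_{i,k}^{\otimes d_k}$ with $v_{i,j}\in\mathbb{C}^2$. *)

theory Defs
  imports Complex_Main
begin

text \<open>An element of S^{d_0} C^2 (x) ... (x) S^{d_{k-1}} C^2 is identified with a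
multihomogeneous polynomial (function) in k pairs of variables (x j, y j), j < k.
The tensor v_0^{(x)d_0} (x) ... (x) v_{k-1}^{(x)d_{k-1}} with v_j = (a j, b j)
corresponds to the product of the binary forms (a j * x j + b j * y j)^(d j).\<close>

definition ps_decomposable ::
  "nat \<Rightarrow> (nat \<Rightarrow> nat) \<Rightarrow> ((nat \<Rightarrow> complex) \<Rightarrow> (nat \<Rightarrow> complex) \<Rightarrow> complex) \<Rightarrow> nat \<Rightarrow> bool" where
  "ps_decomposable k d T r \<longleftrightarrow>
     (\<exists>a b :: nat \<Rightarrow> nat \<Rightarrow> complex.
        \<forall>x y. T x y = (\<Sum>i<r. \<Prod>j<k. (a i j * x j + b i j * y j) ^ d j))"

definition ps_rank ::
  "nat \<Rightarrow> (nat \<Rightarrow> nat) \<Rightarrow> ((nat \<Rightarrow> complex) \<Rightarrow> (nat \<Rightarrow> complex) \<Rightarrow> complex) \<Rightarrow> nat" where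
  "ps_rank k d T = (LEAST r. ps_decomposable k d T r)"

definition W_form :: "nat \<Rightarrow> complex \<Rightarrow> complex \<Rightarrow> complex" where
  "W_form d x y = x ^ (d - 1) * y"

definition W_tensor :: "nat \<Rightarrow> (nat \<Rightarrow> nat) \<Rightarrow> (nat \<Rightarrow> complex) \<Rightarrow> (nat \<Rightarrow> complex) \<Rightarrow> complex" where
  "W_tensor k d x y = (\<Prod>j<k. W_form (d j) (x j) (y j))"

end

theory Submission imports Defs "HOL-Computational_Algebra.Polynomial"
begin

lemma ex_nth_root: "n > 0 \<Longrightarrow> \<exists>z::complex. z ^ n = c"
proof (cases "c = 0")
  case True
  assume "n > 0" thus ?thesis using True by (intro exI[of _ 0]) simp
next
  case False
  assume n: "n > 0"
  have "card {z::complex. z ^ n = c} = n" by (rule card_nth_roots[OF False n])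
  hence "{z::complex. z ^ n = c} \<noteq> {}" using n by (metis card.empty less_not_refl)
  thus ?thesis by auto
qed

lemma decomp_from_sum:
  fixes T :: "(nat \<Rightarrow> complex) \<Rightarrow> (nat \<Rightarrow> complex) \<Rightarrow> complex"
    and k :: nat and d :: "nat \<Rightarrow> nat" and c :: "'e \<Rightarrow> complex" and \<beta> :: "'e \<Rightarrow> nat \<Rightarrow> complex"
  assumes fin: "finite E" and k: "k > 0" and d0: "d 0 > 0"
    and T: "\<And>x y. T x y = (\<Sum>e\<in>E. c e * (\<Prod>j<k. (x j + \<beta> e j * y j) ^ d j))"
  shows "ps_decomposable k d T (card E)"
proof -
  obtain h where h: "bij_betw h {0..<card E} E" using ex_bij_betw_nat_finite[OF fin] by blast
  have "\<forall>e. \<exists>z. z ^ d 0 = c e" using ex_nth_root[OF d0] by blast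
  then obtain lm where lam: "\<And>e. lm e ^ d 0 = c e" by metis
  define a where "a = (\<lambda>i (j::nat). if j = 0 then lm (h i) else 1)"
  define b where "b = (\<lambda>i (j::nat). (if j = 0 then lm (h i) else 1) * \<beta> (h i) j)"
  have key: "(\<Prod>j<k. (a i j * x j + b i j * y j) ^ d j) = c (h i) * (\<Prod>j<k. (x j + \<beta> (h i) j * y j) ^ d j)" for i and x y :: "nat \<Rightarrow> complex"
  proof -
    have "(\<Prod>j<k. (a i j * x j + b i j * y j) ^ d j) =
      (\<Prod>j<k. (if j = 0 then lm (h i) ^ d 0 else 1) * (x j + \<beta> (h i) j * y j) ^ d j)"
      by (intro prod.cong refl) (auto simp: a_def b_def power_mult_distrib[symmetric] algebra_simps)
    also have "\<dots> = (\<Prod>j<k. (if j = 0 then lm (h i) ^ d 0 else 1)) * (\<Prod>j<k. (x j + \<beta> (h i) j * y j) ^ d j)"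
      by (rule prod.distrib)
    also have "(\<Prod>j<k. (if j = 0 then lm (h i) ^ d 0 else 1)) = lm (h i) ^ d 0"
      using k by (subst prod.If_cases) (auto simp: Int_absorb2)
    finally show ?thesis by (simp add: lam)
  qed
  show ?thesis unfolding ps_decomposable_def
  proof (intro exI allI)
    fix x y
    have "T x y = (\<Sum>i\<in>{0..<card E}. c (h i) * (\<Prod>j<k. (x j + \<beta> (h i) j * y j) ^ d j))"
      unfolding T by (rule sum.reindex_bij_betw[OF h, symmetric])
    also have "\<dots> = (\<Sum>i<card E. \<Prod>j<k. (a i j * x j + b i j * y j) ^ d j)"
      by (simp add: key atLeast0LessThan)
    finally show "T x y = (\<Sum>i<card E. \<Prod>j<k. (a i j * x j + b i j * y j) ^ d j)" .
  qed
qed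


lemma coeff_lin_pow:
  fixes a b :: complex
  shows "coeff ([:a,b:]^n) 0 = a^n \<and> coeff ([:a,b:]^n) 1 = of_nat n * a^(n-1) * b"
proof (induction n)
  case 0 then show ?case by simp
next
  case (Suc n)
  have c1: "coeff ([:a,b:]^Suc n) 1 = a * coeff ([:a,b:]^n) 1 + b * coeff ([:a,b:]^n) 0"
    by (simp add: coeff_mult)
  have i0: "coeff ([:a,b:]^n) 0 = a^n" and i1: "coeff ([:a,b:]^n) 1 = of_nat n * a^(n-1) * b"
    using Suc by auto
  show ?case
  proof
    show "coeff ([:a,b:]^Suc n) 0 = a^Suc n" using i0 by (simp add: coeff_mult)
    show "coeff ([:a,b:]^Suc n) 1 = of_nat (Suc n) * a^(Suc n-1) * b"
      unfolding c1 i0 i1 by (cases n) (simp_all add: algebra_simps)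
  qed
qed

lemma root_pow_ne1:
  assumes "0 < i" "i < M"
  shows "cis (2 * pi / real M) ^ i \<noteq> 1"
proof
  assume h: "cis (2 * pi / real M) ^ i = 1"
  have M: "M > 0" using assms by simp
  have inj: "inj_on (\<lambda>k. cis (2 * pi * real k / real M)) {..<M}"
    using bij_betw_roots_unity[OF M] by (simp add: bij_betw_def)
  have "cis (2 * pi * real i / real M) = cis (2 * pi * real 0 / real M)"
    using h by (simp add: DeMoivre mult_ac)
  hence "i = 0" using inj_onD[OF inj _] assms by simp
  thus False using assms by simp
qed

lemma root_sum_poly:
  fixes B :: "complex poly"
  assumes M: "M > 0" and deg: "degree B < M"
  shows "(\<Sum>m<M. poly B (cis (2 * pi / real M) ^ m)) = of_nat M * coeff B 0"
proof -
  define z where "z = cis (2 * pi / real M)"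
  have zM: "z ^ M = 1" unfolding z_def using M by (simp add: DeMoivre)
  have geo: "(\<Sum>m<M. (z ^ i) ^ m) = (if i = 0 then of_nat M else 0)" if "i \<le> degree B" for i
  proof (cases "i = 0")
    case True then show ?thesis by simp
  next
    case False
    have ne: "z ^ i \<noteq> 1" unfolding z_def using root_pow_ne1[of i M] False that deg by simp
    have "(z ^ i) ^ M = 1" by (metis power_mult power_one zM mult.commute)
    then show ?thesis using False geometric_sum[OF ne, of M] by simp
  qed
  have "(\<Sum>m<M. poly B (z ^ m)) = (\<Sum>m<M. \<Sum>i\<le>degree B. coeff B i * (z ^ i) ^ m)"
    by (simp add: poly_altdef power_mult[symmetric] mult.commute)
  also have "\<dots> = (\<Sum>i\<le>degree B. coeff B i * (\<Sum>m<M. (z ^ i) ^ m))"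
    by (subst sum.swap) (simp add: sum_distrib_left)
  also have "\<dots> = (\<Sum>i\<le>degree B. if i = 0 then coeff B 0 * of_nat M else 0)"
    by (intro sum.cong refl) (simp add: geo)
  also have "\<dots> = of_nat M * coeff B 0" by (simp add: sum.delta)
  finally show ?thesis unfolding z_def .
qed


definition sg :: "nat set \<Rightarrow> nat \<Rightarrow> complex" where
  "sg S j = (if j \<in> S then 1 else -1)"

lemma main_identity:
  fixes k N :: nat and d :: "nat \<Rightarrow> nat" and x y :: "nat \<Rightarrow> complex"
  assumes N: "N > 0" and dpos: "\<And>j. j < k \<Longrightarrow> d j \<ge> 1"
    and deg: "(\<Sum>j<k. d j) - k < 2 * N"
  defines "z \<equiv> cis (2 * pi / real (2 * N))"
  shows "W_tensor k d x y = (\<Sum>(m, S)\<in>{..<N} \<times> Pow {..<k}.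
     (inverse (z ^ m) ^ k * (\<Prod>j<k. sg S j) / (of_nat N * 2 ^ k * (\<Prod>j<k. of_nat (d j)))) *
     (\<Prod>j<k. (x j + sg S j * z ^ m * y j) ^ d j))"
proof -
  define oj where "oj = (\<lambda>j. [:x j, y j:] ^ d j - [:x j, - y j:] ^ d j)"
  have co0: "coeff (oj j) 0 = 0" for j
    using coeff_lin_pow[of "x j" "y j" "d j"] coeff_lin_pow[of "x j" "- y j" "d j"]
    by (simp add: oj_def)
  have co1: "coeff (oj j) 1 = 2 * of_nat (d j) * x j ^ (d j - 1) * y j" for j
    using coeff_lin_pow[of "x j" "y j" "d j"] coeff_lin_pow[of "x j" "- y j" "d j"]
    by (simp add: oj_def)
  have "\<forall>j. \<exists>r. oj j = pCons 0 r"
  proof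
    fix j
    obtain a r where ar: "oj j = pCons a r" by (cases "oj j")
    hence "a = 0" using co0[of j] by simp
    thus "\<exists>r. oj j = pCons 0 r" using ar by blast
  qed
  then obtain R where R: "\<And>j. oj j = pCons 0 (R j)" by metis
  have polyo: "poly (oj j) s = (x j + s * y j) ^ d j - ((x j - s * y j) ^ d j)" for j s
    by (simp add: oj_def poly_power algebra_simps)
  have polyR: "poly (oj j) s = s * poly (R j) s" for j s
    using R[of j] by simp
  have cR0: "coeff (R j) 0 = 2 * of_nat (d j) * x j ^ (d j - 1) * y j" for j
    using co1[of j] R[of j] by simp
  have degR: "degree (R j) \<le> d j - 1" for j
  proof -
    have "degree ([:x j, y j:] ^ d j) \<le> d j"
      by (rule order.trans[OF degree_power_le]) simp
    moreover have "degree ([:x j, - y j:] ^ d j) \<le> d j"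
      by (rule order.trans[OF degree_power_le]) simp
    ultimately have "degree (oj j) \<le> d j"
      unfolding oj_def by (meson degree_diff_le)
    thus ?thesis using R[of j] by (cases "R j = 0") auto
  qed
  define B where "B = (\<Prod>j<k. R j)"
  have degB: "degree B < 2 * N"
  proof -
    have "degree B \<le> (\<Sum>j<k. degree (R j))"
      unfolding B_def using degree_prod_sum_le[of "{..<k}" R] by (simp add: oj_def)
    also have "\<dots> \<le> (\<Sum>j<k. d j - 1)" by (intro sum_mono degR)
    also have "\<dots> = (\<Sum>j<k. d j) - k"
    proof -
      have "(\<Sum>j<k. d j - 1) + k = (\<Sum>j<k. d j)"
        using dpos
      proof (induction k)
        case (Suc k)
        have "d k \<ge> 1" using Suc.prems by simp
        have IH: "(\<Sum>j<k. d j - 1) + k = (\<Sum>j<k. d j)" using Suc by simp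
        have "(\<Sum>j<Suc k. d j - 1) + Suc k = ((\<Sum>j<k. d j - 1) + k) + (d k - 1) + 1" by simp
        also have "\<dots> = (\<Sum>j<Suc k. d j)" using IH \<open>d k \<ge> 1\<close> by simp
        finally show ?case .
      qed simp
      thus ?thesis by linarith
    qed
    finally show ?thesis using deg by linarith
  qed
  have cB0: "coeff B 0 = 2 ^ k * (\<Prod>j<k. of_nat (d j)) * W_tensor k d x y"
  proof -
    have "coeff B 0 = (\<Prod>j<k. coeff (R j) 0)"
      unfolding B_def by (simp add: poly_0_coeff_0[symmetric] poly_prod)
    also have "\<dots> = (\<Prod>j<k. 2 * (of_nat (d j) * W_form (d j) (x j) (y j)))"
      by (intro prod.cong refl) (simp add: cR0 W_form_def mult_ac)
    also have "\<dots> = 2 ^ k * (\<Prod>j<k. of_nat (d j)) * W_tensor k d x y"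
      by (simp add: prod.distrib W_tensor_def)
    finally show ?thesis .
  qed
  have evenR: "poly (R j) (- s) = poly (R j) s" if "s \<noteq> 0" for j s
  proof -
    have "poly (oj j) (- s) = - poly (oj j) s" by (simp add: polyo)
    hence "- s * poly (R j) (- s) = - (s * poly (R j) s)" by (simp add: polyR)
    thus ?thesis using that by simp
  qed
  have evenB: "poly B (- s) = poly B s" if "s \<noteq> 0" for s
    unfolding B_def poly_prod using evenR[OF that] by simp
  have zN: "z ^ N = -1"
    unfolding z_def using N by (simp add: DeMoivre)
  have znz: "z ^ m \<noteq> 0" for m unfolding z_def by simp
  have sum2: "(\<Sum>m<2*N. poly B (z ^ m)) = 2 * (\<Sum>m<N. poly B (z ^ m))"
  proof -
    have "(\<Sum>m<2*N. poly B (z ^ m)) = (\<Sum>m\<in>{0..<N}. poly B (z ^ m)) + (\<Sum>m\<in>{N..<N+N}. poly B (z ^ m))"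
      using sum.atLeastLessThan_concat[of 0 N "N+N" "\<lambda>m. poly B (z ^ m)"]
      by (simp add: atLeast0LessThan mult_2)
    also have "(\<Sum>m\<in>{N..<N+N}. poly B (z ^ m)) = (\<Sum>m\<in>{0..<N}. poly B (z ^ (m + N)))"
      using sum.shift_bounds_nat_ivl[of "\<lambda>m. poly B (z ^ m)" 0 N N] by simp
    also have "\<dots> = (\<Sum>m\<in>{0..<N}. poly B (z ^ m))"
      by (intro sum.cong refl) (simp add: power_add zN evenB[OF znz])
    finally show ?thesis by (simp add: atLeast0LessThan)
  qed
  have rs: "(\<Sum>m<2*N. poly B (z ^ m)) = of_nat (2 * N) * coeff B 0"
    unfolding z_def by (rule root_sum_poly) (use N degB in auto)
  have half: "(\<Sum>m<N. poly B (z ^ m)) = of_nat N * coeff B 0"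
    using rs sum2 by simp
  have expand: "poly B s = inverse s ^ k * (\<Sum>S\<in>Pow {..<k}. (\<Prod>j<k. sg S j) * (\<Prod>j<k. (x j + sg S j * s * y j) ^ d j))"
    if "s \<noteq> 0" for s
  proof -
    have "(\<Prod>j<k. poly (oj j) s) = s ^ k * poly B s"
      by (simp add: polyR B_def poly_prod prod.distrib)
    hence pB: "poly B s = inverse s ^ k * (\<Prod>j<k. poly (oj j) s)"
      using that by (simp add: field_simps)
    have "(\<Prod>j<k. poly (oj j) s) = (\<Prod>j<k. (x j + s * y j) ^ d j + - ((x j - s * y j) ^ d j))"
      by (simp add: polyo)
    also have "\<dots> = (\<Sum>S\<in>Pow {..<k}. (\<Prod>j\<in>S. (x j + s * y j) ^ d j) * (\<Prod>j\<in>{..<k}-S. - ((x j - s * y j) ^ d j)))"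
      by (rule prod_add) simp
    also have "\<dots> = (\<Sum>S\<in>Pow {..<k}. (\<Prod>j<k. sg S j) * (\<Prod>j<k. (x j + sg S j * s * y j) ^ d j))"
    proof (intro sum.cong refl)
      fix S assume S: "S \<in> Pow {..<k}"
      have "(\<Prod>j<k. sg S j) * (\<Prod>j<k. (x j + sg S j * s * y j) ^ d j)
          = (\<Prod>j<k. sg S j * (x j + sg S j * s * y j) ^ d j)" by (simp add: prod.distrib)
      also have "\<dots> = (\<Prod>j<k. if j \<in> S then (x j + s * y j) ^ d j else - ((x j - s * y j) ^ d j))"
        by (intro prod.cong refl) (simp add: sg_def)
      also have "\<dots> = (\<Prod>j\<in>S. (x j + s * y j) ^ d j) * (\<Prod>j\<in>{..<k}-S. - ((x j - s * y j) ^ d j))"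
        using S by (subst prod.If_cases) (auto simp: Int_absorb1 Diff_eq)
      finally show "(\<Prod>j\<in>S. (x j + s * y j) ^ d j) * (\<Prod>j\<in>{..<k}-S. - ((x j - s * y j) ^ d j))
          = (\<Prod>j<k. sg S j) * (\<Prod>j<k. (x j + sg S j * s * y j) ^ d j)" by simp
    qed
    finally show ?thesis using pB by simp
  qed
  have dnz: "(\<Prod>j<k. (of_nat (d j) :: complex)) \<noteq> 0"
    using dpos by (auto simp: prod_zero_iff Suc_le_eq)
  define Q where "Q = of_nat N * 2 ^ k * (\<Prod>j<k. (of_nat (d j) :: complex))"
  have Qnz: "Q \<noteq> 0" using N dnz by (simp add: Q_def)
  have "W_tensor k d x y = (\<Sum>m<N. poly B (z ^ m)) / Q"
    using half cB0 Qnz by (simp add: Q_def field_simps)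
  also have "\<dots> = (\<Sum>m<N. \<Sum>S\<in>Pow {..<k}. (inverse (z ^ m) ^ k * (\<Prod>j<k. sg S j) / Q) *
     (\<Prod>j<k. (x j + sg S j * z ^ m * y j) ^ d j))"
    unfolding sum_divide_distrib
  proof (intro sum.cong refl)
    fix m
    show "poly B (z ^ m) / Q = (\<Sum>S\<in>Pow {..<k}. (inverse (z ^ m) ^ k * (\<Prod>j<k. sg S j) / Q) *
     (\<Prod>j<k. (x j + sg S j * z ^ m * y j) ^ d j))"
      unfolding expand[OF znz] sum_divide_distrib sum_distrib_left
      by (intro sum.cong refl) (simp add: mult_ac)
  qed
  also have "\<dots> = (\<Sum>(m, S)\<in>{..<N} \<times> Pow {..<k}. (inverse (z ^ m) ^ k * (\<Prod>j<k. sg S j) / Q) *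
     (\<Prod>j<k. (x j + sg S j * z ^ m * y j) ^ d j))"
    by (rule sum.cartesian_product)
  finally show ?thesis unfolding Q_def .
qed

theorem theorem3p6:
  fixes k :: nat and d :: "nat \<Rightarrow> nat"
  assumes "k \<ge> 2"
    and "\<And>j. j < k \<Longrightarrow> d j \<ge> 3"
  shows "ps_rank k d (W_tensor k d) \<le> 2 ^ (k - 1) * (\<Sum>j<k. d j)"
proof -
  define D where "D = (\<Sum>j<k. d j)"
  define N where "N = (D - k) div 2 + 1"
  define z where "z = cis (2 * pi / real (2 * N))"
  define E where "E = {..<N} \<times> Pow {..<k}"
  have dpos: "\<And>j. j < k \<Longrightarrow> d j \<ge> 1" using assms(2) by (meson le_trans one_le_numeral)
  have Dk: "3 * k \<le> D"
  proof -
    have "(\<Sum>j<k. 3) \<le> (\<Sum>j<k. d j)" by (intro sum_mono assms(2)) simp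
    thus ?thesis by (simp add: D_def)
  qed
  have N: "N > 0" by (simp add: N_def)
  have deg: "(\<Sum>j<k. d j) - k < 2 * N" unfolding D_def[symmetric] N_def by presburger
  define c where "c = (\<lambda>(m, S). inverse (z ^ m) ^ k * (\<Prod>j<k. sg S j) / (of_nat N * 2 ^ k * (\<Prod>j<k. of_nat (d j) :: complex)))"
  define \<beta> where "\<beta> = (\<lambda>(m::nat, S) (j::nat). sg S j * z ^ m)"
  have dec: "ps_decomposable k d (W_tensor k d) (card E)"
  proof (rule decomp_from_sum)
    show "finite E" by (simp add: E_def)
    show "k > 0" using assms(1) by simp
    show "d 0 > 0" using dpos[of 0] assms(1) by simp
    fix x y :: "nat \<Rightarrow> complex"
    show "W_tensor k d x y = (\<Sum>e\<in>E. c e * (\<Prod>j<k. (x j + \<beta> e j * y j) ^ d j))"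
    proof -
      have "W_tensor k d x y = (\<Sum>(m, S)\<in>{..<N} \<times> Pow {..<k}.
     (inverse (z ^ m) ^ k * (\<Prod>j<k. sg S j) / (of_nat N * 2 ^ k * (\<Prod>j<k. of_nat (d j)))) *
     (\<Prod>j<k. (x j + sg S j * z ^ m * y j) ^ d j))"
        unfolding z_def by (rule main_identity[OF N dpos deg])
      also have "\<dots> = (\<Sum>e\<in>E. c e * (\<Prod>j<k. (x j + \<beta> e j * y j) ^ d j))"
        unfolding E_def by (intro sum.cong refl) (auto simp: c_def \<beta>_def)
      finally show ?thesis .
    qed
  qed
  have "ps_rank k d (W_tensor k d) \<le> card E"
    unfolding ps_rank_def by (rule Least_le[where P="\<lambda>r. ps_decomposable k d (W_tensor k d) r", OF dec])
  also have "card E = N * 2 ^ k" by (simp add: E_def card_cartesian_product card_Pow)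
  also have "\<dots> \<le> 2 ^ (k - 1) * D"
  proof -
    have "2 ^ k = 2 * 2 ^ (k - 1)" using assms(1)
      by (metis Suc_diff_1 less_le_trans pos2 power_Suc)
    moreover have "2 * N \<le> D" unfolding N_def using Dk assms(1) by presburger
    ultimately show ?thesis by (metis mult.assoc mult.commute mult_le_mono2)
  qed
  finally show ?thesis by (simp add: D_def)
qed

end
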